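(* Let $A=\mathrm{diag}(G_1,\dots,G_m,[1])\in\mathbb{R}^{n\times n}$ (where the trailing block $[1]$ may or may not be present), with $G_j=\begin{bmatrix}c_j&s_j\\-s_j&c_j\end{bmatrix}$, $c_j^2+s_j^2=1$, $s_j\neq 0$, and $0<c_1<c_2<\cdots<c_m$. Let $v_0\in\mathbb{R}^n$ be a unit norm vector with $d(A,v_0)\geq 2$ and $v_0^{(1)}\neq 0$, run the iteration ACI($1$) below, and let $k_0$ and $\varrho\in(0,1)$ be such that $\|v_{k+1}^{(j)}\|\leq\varrho\|v_k^{(j)}\|$ for all $k\geq k_0$ and all blocks $j\geq 2$. Then for all $k\geq k_0$, $$\|v_{k+1}^{(1)}-v_k^{(1)}\|\leq\varrho^{\,k-k_0}.$$
   Context: Block partitioning: every $v\in\mathbb{R}^n$ is written as $v=[v^{(1)};\dots;v^{(m)};v^{(m+1)}]$ with $v^{(j)}\in\mathbb{R}^2$ for $j=1,\dots,m$ (conforming with the blocks $G_j$) and $v^{(m+1)}\in\mathbb{R}$ (present only if the block $[1]$ is present). ACI($1$): for $k=0,1,2,\dots$: $\widetilde w_k=(A-\alpha_kI)v_k$ with $\alpha_k=v_k^TAv_k$; $w_k=\widetilde w_k/\|\widetilde w_k\|$; $\widetilde v_{k+1}=(A^T-\beta_kI)w_k$ with $\beta_k=w_k^TAw_k$; $v_{k+1}=\widetilde v_{k+1}/\|\widetilde v_{k+1}\|$. $d(A,v)$ is the grade of $v$ w.r.t. $A$ (degree of the monic polynomial $p$ of smallest degree with $p(A)v=0$); $\|\cdot\|$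 is the Euclidean norm. (The paper states this with the normalization $k_0=0$, giving $\|v_{k+1}^{(1)}-v_k^{(1)}\|\leq\varrho^k$.) *)

theory Defs
  imports Complex_Main "HOL-Computational_Algebra.Polynomial"
begin

text \<open>Vectors in R^n are represented as functions nat => real, components 0..n-1
  (0-based); matrices as nat => nat => real with row/column indices below n.
  Block j (1-based, 1 <= j <= m) of a vector consists of components 2j-2, 2j-1;
  the trailing scalar block (index m+1, present iff t) is component 2m.\<close>

definition dimn :: "nat \<Rightarrow> bool \<Rightarrow> nat" where
  "dimn m t = 2 * m + (if t then 1 else 0)"

text \<open>A = diag(G_1,...,G_m,[1]) with G_j = [[c_j, s_j], [-s_j, c_j]].\<close>
definition Amat :: "(nat \<Rightarrow> real) \<Rightarrow> (nat \<Rightarrow> real) \<Rightarrow> nat \<Rightarrow> bool \<Rightarrow> nat \<Rightarrow> nat \<Rightarrow> real" where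
  "Amat c s m t i j =
    (if i < 2 * m \<and> j < 2 * m \<and> i div 2 = j div 2 then
       (if even i \<and> even j then c (i div 2 + 1)
        else if even i \<and> odd j then s (i div 2 + 1)
        else if odd i \<and> even j then - s (i div 2 + 1)
        else c (i div 2 + 1))
     else if t \<and> i = 2 * m \<and> j = 2 * m then 1 else 0)"

definition transp :: "(nat \<Rightarrow> nat \<Rightarrow> real) \<Rightarrow> nat \<Rightarrow> nat \<Rightarrow> real" where
  "transp M i j = M j i"

definition matvec :: "nat \<Rightarrow> (nat \<Rightarrow> nat \<Rightarrow> real) \<Rightarrow> (nat \<Rightarrow> real) \<Rightarrow> nat \<Rightarrow> real" where
  "matvec n M v i = (if i < n then (\<Sum>j<n. M i j * v j) else 0)"

definition inner_n :: "nat \<Rightarrow> (nat \<Rightarrow> real) \<Rightarrow> (nat \<Rightarrow> real) \<Rightarrow> real" where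
  "inner_n n u v = (\<Sum>i<n. u i * v i)"

definition norm_n :: "nat \<Rightarrow> (nat \<Rightarrow> real) \<Rightarrow> real" where
  "norm_n n v = sqrt (inner_n n v v)"

definition normalize_n :: "nat \<Rightarrow> (nat \<Rightarrow> real) \<Rightarrow> nat \<Rightarrow> real" where
  "normalize_n n v i = (if i < n then v i / norm_n n v else 0)"

definition polyapp :: "nat \<Rightarrow> (nat \<Rightarrow> nat \<Rightarrow> real) \<Rightarrow> real poly \<Rightarrow> (nat \<Rightarrow> real) \<Rightarrow> nat \<Rightarrow> real" where
  "polyapp n M p v i = (\<Sum>k\<le>degree p. coeff p k * ((matvec n M ^^ k) v) i)"

definition grade :: "nat \<Rightarrow> (nat \<Rightarrow> nat \<Rightarrow> real) \<Rightarrow> (nat \<Rightarrow> real) \<Rightarrow> nat" where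
  "grade n M v = (LEAST d. \<exists>p. lead_coeff p = 1 \<and> degree p = d \<and>
                      (\<forall>i<n. polyapp n M p v i = 0))"

fun aci_v :: "nat \<Rightarrow> (nat \<Rightarrow> nat \<Rightarrow> real) \<Rightarrow> (nat \<Rightarrow> real) \<Rightarrow> nat \<Rightarrow> nat \<Rightarrow> real"
and aci_w :: "nat \<Rightarrow> (nat \<Rightarrow> nat \<Rightarrow> real) \<Rightarrow> (nat \<Rightarrow> real) \<Rightarrow> nat \<Rightarrow> nat \<Rightarrow> real" where
  "aci_v n M v0 0 = v0"
| "aci_w n M v0 k =
     (let v = aci_v n M v0 k;
          \<alpha> = inner_n n v (matvec n M v)
      in normalize_n n (\<lambda>i. matvec n M v i - \<alpha> * v i))"
| "aci_v n M v0 (Suc k) =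
     (let w = aci_w n M v0 k;
          \<beta> = inner_n n w (matvec n M w)
      in normalize_n n (\<lambda>i. matvec n (transp M) w i - \<beta> * w i))"

definition blknorm :: "nat \<Rightarrow> (nat \<Rightarrow> real) \<Rightarrow> nat \<Rightarrow> real" where
  "blknorm m v j = (if j \<le> m then sqrt ((v (2*j-2))\<^sup>2 + (v (2*j-1))\<^sup>2)
                    else \<bar>v (2*m)\<bar>)"

end

theory Submission
  imports Defs
begin

definition tsum :: "nat \<Rightarrow> bool \<Rightarrow> (nat \<Rightarrow> real) \<Rightarrow> real" where
  "tsum m t F = (\<Sum>k<m. F k) + (if t then F m else 0)"
definition ttl :: "nat \<Rightarrow> bool \<Rightarrow> (nat \<Rightarrow> real) \<Rightarrow> real" where
  "ttl m t F = (\<Sum>k\<in>{1..<m}. F k) + (if t then F m else 0)"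

lemma tsum_split: "1 \<le> m \<Longrightarrow> tsum m t F = F 0 + ttl m t F"
  unfolding tsum_def ttl_def
  by (simp add: lessThan_atLeast0 sum.atLeast_Suc_lessThan)

lemma sum_double: "(\<Sum>i<2*(m::nat). (g::nat\<Rightarrow>real) i) = (\<Sum>k<m. g (2*k) + g (2*k+1))"
  by (induction m) (auto simp: sum.lessThan_Suc)

lemma sum_dimn: "(\<Sum>i<dimn m t. g i) = tsum m t (\<lambda>k. if k < m then g (2*k) + g (2*k+1) else g (2*m))"
  unfolding tsum_def dimn_def by (auto simp: sum_double)

lemma Amat_even: "k < m \<Longrightarrow> Amat c s m t (2*k) j = (if j = 2*k then c (Suc k) else 0) + (if j = 2*k+1 then s (Suc k) else 0)"
  unfolding Amat_def by auto

lemma Amat_odd: "k < m \<Longrightarrow> Amat c s m t (2*k+1) j = (if j = 2*k then - s (Suc k) else 0) + (if j = 2*k+1 then c (Suc k) else 0)"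
  unfolding Amat_def by auto

lemma Amat_last: "t \<Longrightarrow> Amat c s m t (2*m) j = (if j = 2*m then 1 else 0)"
  unfolding Amat_def by auto

lemma AmatT_even: "k < m \<Longrightarrow> Amat c s m t j (2*k) = (if j = 2*k then c (Suc k) else 0) + (if j = 2*k+1 then - s (Suc k) else 0)"
  unfolding Amat_def by auto

lemma AmatT_odd: "k < m \<Longrightarrow> Amat c s m t j (2*k+1) = (if j = 2*k then s (Suc k) else 0) + (if j = 2*k+1 then c (Suc k) else 0)"
  unfolding Amat_def by auto

lemma AmatT_last: "t \<Longrightarrow> Amat c s m t j (2*m) = (if j = 2*m then 1 else 0)"
  unfolding Amat_def by auto

lemma sum1: "a < (n::nat) \<Longrightarrow> (\<Sum>j<n. (if j = a then x else 0) * v j) = (x::real) * v a"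
proof -
  assume a: "a < n"
  have "(\<Sum>j<n. (if j = a then x else 0) * v j) = (\<Sum>j<n. if j = a then x * v a else 0)"
    by (rule sum.cong) auto
  also have "\<dots> = x * v a" by (subst sum.delta) (use a in auto)
  finally show ?thesis .
qed

lemma sum2: "a < (n::nat) \<Longrightarrow> b < n \<Longrightarrow> (\<Sum>j<n. ((if j = a then x else 0) + (if j = b then y else 0)) * v j) = (x::real) * v a + y * v b"
  by (simp only: distrib_right sum.distrib sum1)

lemma mv_even: assumes "k < m" shows "matvec (dimn m t) (Amat c s m t) v (2*k) = c (Suc k) * v (2*k) + s (Suc k) * v (2*k+1)"
proof -
  have n: "2*k < dimn m t" "2*k+1 < dimn m t" using assms by (auto simp: dimn_def)
  show ?thesis unfolding matvec_def by (simp only: n if_True Amat_even[OF assms] sum2[OF n])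
qed

lemma mv_odd: assumes "k < m" shows "matvec (dimn m t) (Amat c s m t) v (2*k+1) = - s (Suc k) * v (2*k) + c (Suc k) * v (2*k+1)"
proof -
  have n: "2*k < dimn m t" "2*k+1 < dimn m t" using assms by (auto simp: dimn_def)
  show ?thesis unfolding matvec_def by (simp only: n if_True Amat_odd[OF assms] sum2[OF n])
qed

lemma mv_last: assumes "t" shows "matvec (dimn m t) (Amat c s m t) v (2*m) = v (2*m)"
proof -
  have n: "2*m < dimn m t" using assms by (auto simp: dimn_def)
  show ?thesis unfolding matvec_def by (simp only: n if_True Amat_last[OF assms] sum1[OF n] mult_1)
qed

lemma mvT_even: assumes "k < m" shows "matvec (dimn m t) (transp (Amat c s m t)) v (2*k) = c (Suc k) * v (2*k) - s (Suc k) * v (2*k+1)"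
proof -
  have n: "2*k < dimn m t" "2*k+1 < dimn m t" using assms by (auto simp: dimn_def)
  show ?thesis unfolding matvec_def transp_def by (simp only: n if_True AmatT_even[OF assms] sum2[OF n])
qed

lemma mvT_odd: assumes "k < m" shows "matvec (dimn m t) (transp (Amat c s m t)) v (2*k+1) = s (Suc k) * v (2*k) + c (Suc k) * v (2*k+1)"
proof -
  have n: "2*k < dimn m t" "2*k+1 < dimn m t" using assms by (auto simp: dimn_def)
  show ?thesis unfolding matvec_def transp_def by (simp only: n if_True AmatT_odd[OF assms] sum2[OF n])
qed

lemma mvT_last: assumes "t" shows "matvec (dimn m t) (transp (Amat c s m t)) v (2*m) = v (2*m)"
proof -
  have n: "2*m < dimn m t" using assms by (auto simp: dimn_def)
  show ?thesis unfolding matvec_def transp_def by (simp only: n if_True AmatT_last[OF assms] sum1[OF n] mult_1)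
qed


lemma tsum_cong: "(\<And>k. k < m \<or> (t \<and> k = m) \<Longrightarrow> F k = G k) \<Longrightarrow> tsum m t F = tsum m t G"
  unfolding tsum_def by (auto intro!: sum.cong)
lemma ttl_cong: "1 \<le> m \<Longrightarrow> (\<And>k. 1 \<le> k \<Longrightarrow> k < m \<or> (t \<and> k = m) \<Longrightarrow> F k = G k) \<Longrightarrow> ttl m t F = ttl m t G"
  unfolding ttl_def by (auto intro!: sum.cong)
lemma tsum_mono: "(\<And>k. k < m \<or> (t \<and> k = m) \<Longrightarrow> F k \<le> G k) \<Longrightarrow> tsum m t F \<le> tsum m t G"
  unfolding tsum_def by (auto intro!: add_mono sum_mono)
lemma ttl_mono: "1 \<le> m \<Longrightarrow> (\<And>k. 1 \<le> k \<Longrightarrow> k < m \<or> (t \<and> k = m) \<Longrightarrow> F k \<le> G k) \<Longrightarrow> ttl m t F \<le> ttl m t G"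
  unfolding ttl_def by (auto intro!: add_mono sum_mono)
lemma ttl_nonneg: "1 \<le> m \<Longrightarrow> (\<And>k. 1 \<le> k \<Longrightarrow> k < m \<or> (t \<and> k = m) \<Longrightarrow> 0 \<le> F k) \<Longrightarrow> 0 \<le> ttl m t F"
  using ttl_mono[where F="\<lambda>_. 0" and G=F] by (simp add: ttl_def)
lemma tsum_mult: "tsum m t (\<lambda>k. a * F k) = a * tsum m t F"
  unfolding tsum_def by (simp add: sum_distrib_left distrib_left)
lemma ttl_mult: "ttl m t (\<lambda>k. a * F k) = a * ttl m t F"
  unfolding ttl_def by (simp add: sum_distrib_left distrib_left)
lemma tsum_divide: "tsum m t (\<lambda>k. F k / a) = tsum m t F / a"
  unfolding tsum_def by (simp add: sum_divide_distrib add_divide_distrib)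
lemma tsum_diff: "tsum m t (\<lambda>k. F k - G k) = tsum m t F - tsum m t G"
  unfolding tsum_def by (simp add: sum_subtractf)
lemma ttl_diff: "ttl m t (\<lambda>k. F k - G k) = ttl m t F - ttl m t G"
  unfolding ttl_def by (simp add: sum_subtractf)

lemma key_ineq:
  fixes p x a b K T :: real
  assumes p: "0 < p" "p \<le> 1" and x: "x = 1 - p"
    and a: "0 < a" and K: "0 < K" and KT: "K^2 = p*(a^2+b^2) + T"
    and T: "0 \<le> T" "T \<le> (a^2+b^2) * x" and b: "b^2 \<le> x * a^2"
  shows "p * ((a/K - 1)^2 + (b/K)^2) \<le> x"
proof -
  define Q where "Q = a^2 + b^2"
  have x01: "0 \<le> x" "x \<le> 1" using x p by auto
  have "x * a^2 \<le> 1 * a^2" by (rule mult_right_mono) (use x01 in \<open>auto\<close>)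
  hence ba: "b^2 \<le> a^2" using b by linarith
  have Q2: "Q \<le> 2*a^2" using ba unfolding Q_def by linarith
  have Qpos: "0 < Q" using a unfolding Q_def by (simp add: add_pos_nonneg)
  have KQ: "p*Q \<le> K^2" using KT T unfolding Q_def by linarith
  have eq: "p * ((a/K - 1)^2 + (b/K)^2) = p*(Q - 2*a*K + K^2) / K^2"
    using K unfolding Q_def by (simp add: field_simps power2_eq_square)
  have main: "p*Q + (2*p-1)*K^2 \<le> 2*p*a*K"
  proof (cases "p \<le> 1/2")
    case True
    have "(2*p-1)*K^2 \<le> (2*p-1)*(p*Q)"
      by (rule mult_left_mono_neg) (use True KQ in \<open>auto\<close>)
    hence 1: "p*Q + (2*p-1)*K^2 \<le> 2*p*(p*Q)" by (simp add: algebra_simps)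
    have pQa: "p*Q \<le> a^2"
    proof -
      have "p*Q \<le> (1/2)*(2*a^2)" by (rule mult_mono) (use True Q2 p Qpos in \<open>auto\<close>)
      thus ?thesis by simp
    qed
    have "(p*Q)*(p*Q) \<le> a^2 * K^2" by (rule mult_mono) (use pQa KQ p Qpos in \<open>auto\<close>)
    hence "(p*Q)^2 \<le> (a*K)^2" by (simp add: power2_eq_square algebra_simps)
    hence "p*Q \<le> a*K" by (rule power2_le_imp_le) (use a K in \<open>auto\<close>)
    hence "2*p*(p*Q) \<le> 2*p*(a*K)" by (rule mult_left_mono) (use p in \<open>auto\<close>)
    with 1 show ?thesis by (simp add: algebra_simps)
  next
    case False
    show ?thesis
    proof (cases "p*Q + (2*p-1)*K^2 \<le> 0")
      case True
      have "0 \<le> 2*p*a*K" using p a K by simp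
      with True show ?thesis by linarith
    next
      case F2: False
      have L: "p*Q + (2*p-1)*K^2 = 2*p^2*Q + (2*p-1)*T" using KT unfolding Q_def
        by (simp add: algebra_simps power2_eq_square)
      have K2: "(2*p*a*K)^2 = 4*p^2*a^2*(p*(a^2+b^2)+T)" by (simp add: power_mult_distrib KT)
      have id: "(2*p^2*Q + (2*p-1)*T)^2 - (2*p*a*K)^2
          = 4*p^3*Q*(p*b^2 - x*a^2) + 4*p^2*T*((2*p-1)*b^2 - 2*x*a^2) + (2*p-1)^2*T^2"
        unfolding K2 x Q_def by (simp add: algebra_simps power2_eq_square power3_eq_cube)
      have u1: "(2*p-1)^2 \<le> 1"
      proof -
        have "0 \<le> 2*p-1" "2*p-1 \<le> 1" using p False by auto
        hence "(2*p-1)*(2*p-1) \<le> 1*1" by (intro mult_mono) auto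
        thus ?thesis by (simp add: power2_eq_square)
      qed
      have p4: "1 \<le> 4*p^2"
      proof -
        have "1/2 \<le> p" using False by simp
        hence "(1/2)*(1/2) \<le> p*p" by (intro mult_mono) auto
        thus ?thesis by (simp add: power2_eq_square)
      qed
      have Qx: "0 \<le> Q*x" using Qpos x01 by simp
      have t1: "(2*p-1)^2*T^2 \<le> 8*p^2*T*x*a^2"
      proof -
        have "(2*p-1)^2*T^2 \<le> 1*T^2" by (rule mult_right_mono) (use u1 in auto)
        also have "\<dots> = T*T" by (simp add: power2_eq_square)
        also have "\<dots> \<le> T*(Q*x)" using T unfolding Q_def by (simp add: mult_left_mono)
        also have "\<dots> \<le> T*((4*p^2)*(Q*x))"
          by (rule mult_left_mono) (use T p4 Qx in \<open>auto simp: mult_le_cancel_right1\<close>)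
        also have "\<dots> \<le> T*((4*p^2)*((2*a^2)*x))"
        proof -
          have "Q*x \<le> (2*a^2)*x" by (rule mult_right_mono) (use Q2 x01 in auto)
          hence "(4*p^2)*(Q*x) \<le> (4*p^2)*((2*a^2)*x)" by (rule mult_left_mono) simp
          thus ?thesis by (rule mult_left_mono) (use T in auto)
        qed
        finally show ?thesis by (simp add: algebra_simps)
      qed
      have t2: "b^2*(p^2*Q + (2*p-1)*T) \<le> p*x*a^2*Q"
      proof -
        have "(2*p-1)*T \<le> p*(Q*x)"
          by (rule mult_mono) (use T p in \<open>auto simp: Q_def\<close>)
        hence "p^2*Q + (2*p-1)*T \<le> p^2*Q + p*(Q*x)" by linarith
        also have "\<dots> = p*Q" unfolding x by (simp add: algebra_simps power2_eq_square)
        finally have h: "p^2*Q + (2*p-1)*T \<le> p*Q" .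
        have "b^2*(p^2*Q + (2*p-1)*T) \<le> b^2*(p*Q)" using h by (simp add: mult_left_mono)
        also have "\<dots> \<le> (x*a^2)*(p*Q)" by (rule mult_right_mono) (use b p Qpos in \<open>auto\<close>)
        finally show ?thesis by (simp add: algebra_simps)
      qed
      have e: "4*p^3*Q*(p*b^2 - x*a^2) + 4*p^2*T*((2*p-1)*b^2 - 2*x*a^2) + (2*p-1)^2*T^2
            = 4*p^2*(b^2*(p^2*Q + (2*p-1)*T) - p*x*a^2*Q) + ((2*p-1)^2*T^2 - 8*p^2*T*x*a^2)"
        by (simp add: algebra_simps power2_eq_square power3_eq_cube)
      have "4*p^2*(b^2*(p^2*Q + (2*p-1)*T) - p*x*a^2*Q) \<le> 0"
        by (rule mult_nonneg_nonpos) (use t2 in \<open>auto\<close>)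
      with t1 e id have "(2*p^2*Q + (2*p-1)*T)^2 - (2*p*a*K)^2 \<le> 0" by linarith
      hence "(p*Q + (2*p-1)*K^2)^2 \<le> (2*p*a*K)^2" using L by simp
      thus ?thesis by (rule power2_le_imp_le) (use p a K in \<open>auto\<close>)
    qed
  qed
  have "p*(Q - 2*a*K + K^2) \<le> x*K^2" using main unfolding x by (simp add: algebra_simps)
  thus ?thesis using eq K by (simp add: divide_le_eq)
qed


lemma ttl_divide: "ttl m t (\<lambda>k. F k / a) = ttl m t F / a"
  unfolding ttl_def by (simp add: sum_divide_distrib add_divide_distrib)

locale aciS =
  fixes m :: nat and t :: bool and c s :: "nat \<Rightarrow> real"
  assumes m1: "m \<ge> 1"
    and cs: "\<forall>j\<in>{1..m}. (c j)\<^sup>2 + (s j)\<^sup>2 = 1 \<and> s j \<noteq> 0"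
    and c1: "0 < c 1"
    and cmono: "\<forall>j\<in>{1..<m}. c j < c (Suc j)"
begin

abbreviation "n \<equiv> dimn m t"
abbreviation "M \<equiv> Amat c s m t"
abbreviation "blk k \<equiv> k < m \<or> (t \<and> k = m)"

definition CC where "CC k = (if k < m then c (Suc k) else 1)"
definition SS where "SS k = (if k < m then s (Suc k) else 0)"
definition PM :: "(nat \<Rightarrow> real) \<Rightarrow> nat \<Rightarrow> real" where
  "PM v k = (if k < m then (v (2*k))\<^sup>2 + (v (2*k+1))\<^sup>2 else (v (2*m))\<^sup>2)"

lemma PM_nonneg: "0 \<le> PM v k" unfolding PM_def by auto

lemma blk_idx: "blk k \<Longrightarrow> k < m \<Longrightarrow> 2*k < n \<and> 2*k+1 < n" by (auto simp: dimn_def)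
lemma blk_last: "t \<Longrightarrow> 2*m < n" by (auto simp: dimn_def)

lemma CS1: "blk k \<Longrightarrow> (CC k)^2 + (SS k)^2 = 1"
  using cs unfolding CC_def SS_def by auto

lemma c_ge: "k < m \<Longrightarrow> c 1 \<le> c (Suc k)"
proof (induction k)
  case 0 then show ?case by simp
next
  case (Suc k)
  then have "c (Suc k) < c (Suc (Suc k))" using cmono by auto
  with Suc show ?case by auto
qed

lemma C0: "CC 0 = c 1" using m1 unfolding CC_def by auto
lemma S0: "SS 0 = s 1" "s 1 \<noteq> 0" using m1 cs unfolding SS_def by auto
lemma CC_le1: "blk k \<Longrightarrow> CC k \<le> 1"
proof -
  assume "blk k"
  hence "(CC k)^2 \<le> 1" using CS1[of k] zero_le_power2[of "SS k"] by linarith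
  hence "\<bar>CC k\<bar> \<le> 1" by (simp add: abs_square_le_1)
  thus ?thesis by linarith
qed

lemma CC_ge: "blk k \<Longrightarrow> CC 0 \<le> CC k"
proof -
  assume b: "blk k"
  have c11: "c 1 \<le> 1" using CC_le1[of 0] C0 m1 by simp
  show ?thesis
  proof (cases "k < m")
    case True
    then have "CC k = c (Suc k)" by (simp add: CC_def)
    then show ?thesis using c_ge[OF True] C0 by simp
  next
    case False
    then have "CC k = 1" by (simp add: CC_def)
    then show ?thesis using c11 C0 by simp
  qed
qed

lemma C0_lt1: "CC 0 < 1"
proof -
  have "(CC 0)^2 + (SS 0)^2 = 1" using CS1[of 0] m1 by simp
  moreover have "(SS 0)^2 > 0" using S0 by simp
  ultimately have "(CC 0)^2 < 1" by linarith
  hence "\<bar>CC 0\<bar> < 1" by (simp add: abs_square_less_1)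
  thus ?thesis by linarith
qed

lemma C0_pos: "0 < CC 0" using C0 c1 by simp

definition FF :: "real \<Rightarrow> nat \<Rightarrow> real" where "FF a k = (CC k - a)^2 + (SS k)^2"

lemma FF_alt: "blk k \<Longrightarrow> FF a k = 1 - 2*a*CC k + a^2"
  using CS1[of k] unfolding FF_def by (simp add: power2_eq_square algebra_simps)

lemma FF_nonneg: "0 \<le> FF a k" unfolding FF_def by simp

lemma FF0_pos: "0 < FF a 0"
proof -
  have "0 < (SS 0)^2" using S0 by simp
  thus ?thesis unfolding FF_def using zero_le_power2[of "CC 0 - a"] by linarith
qed

lemma FF_le0: "blk k \<Longrightarrow> 0 \<le> a \<Longrightarrow> FF a k \<le> FF a 0"
proof -
  assume b: "blk k" and a: "0 \<le> a"
  have "a * CC 0 \<le> a * CC k" using CC_ge[OF b] a by (rule mult_left_mono)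
  thus ?thesis using FF_alt[OF b] FF_alt[of 0 a] m1 by simp
qed

lemma inner_blocks: "inner_n n u v = tsum m t (\<lambda>k. if k < m then u (2*k) * v (2*k) + u (2*k+1) * v (2*k+1) else u (2*m) * v (2*m))"
  unfolding inner_n_def by (rule sum_dimn)

lemma norm_sq: "(norm_n n u)^2 = tsum m t (PM u)"
proof -
  have "inner_n n u u = tsum m t (PM u)"
    unfolding inner_blocks by (rule tsum_cong) (auto simp: PM_def power2_eq_square)
  moreover have "0 \<le> tsum m t (PM u)" using tsum_mono[of m t "\<lambda>_. 0" "PM u"] PM_nonneg
    by (simp add: tsum_def)
  ultimately show ?thesis unfolding norm_n_def by simp
qed

lemma inner_Mv: "inner_n n v (matvec n M v) = tsum m t (\<lambda>k. CC k * PM v k)"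
  unfolding inner_blocks
proof (rule tsum_cong)
  fix k assume b: "blk k"
  show "(if k < m then v (2*k) * matvec n M v (2*k) + v (2*k+1) * matvec n M v (2*k+1)
        else v (2*m) * matvec n M v (2*m)) = CC k * PM v k"
  proof (cases "k < m")
    case True
    then show ?thesis by (simp only: mv_even[OF True] mv_odd[OF True] mv_odd[OF True, simplified]) (simp add: CC_def PM_def power2_eq_square algebra_simps)
  next
    case False
    then have "t" "k = m" using b by auto
    then show ?thesis using False by (simp add: mv_last CC_def PM_def power2_eq_square)
  qed
qed

lemma PM_shift: "blk k \<Longrightarrow> PM (\<lambda>i. matvec n M v i - a * v i) k = FF a k * PM v k"
proof -
  assume b: "blk k"
  show ?thesis
  proof (cases "k < m")
    case True
    then show ?thesis by (simp add: PM_def mv_even[OF True] mv_odd[OF True] mv_odd[OF True, simplified]) (simp add: CC_def SS_def PM_def FF_def power2_eq_square algebra_simps)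
  next
    case False
    then have tt: "t" and km: "k = m" using b by auto
    show ?thesis using False km by (simp add: PM_def mv_last[OF tt]) (simp add: CC_def SS_def FF_def power2_eq_square algebra_simps)
  qed
qed

lemma PM_shiftT: "blk k \<Longrightarrow> PM (\<lambda>i. matvec n (transp M) v i - a * v i) k = FF a k * PM v k"
proof -
  assume b: "blk k"
  show ?thesis
  proof (cases "k < m")
    case True
    then show ?thesis by (simp add: PM_def mvT_even[OF True] mvT_odd[OF True] mvT_odd[OF True, simplified]) (simp add: CC_def SS_def PM_def FF_def power2_eq_square algebra_simps)
  next
    case False
    then have tt: "t" and km: "k = m" using b by auto
    show ?thesis using False km by (simp add: PM_def mvT_last[OF tt]) (simp add: CC_def SS_def FF_def power2_eq_square algebra_simps)
  qed
qed

lemma PM_normalize: "blk k \<Longrightarrow> PM (normalize_n n u) k = PM u k / (norm_n n u)^2"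
proof -
  assume b: "blk k"
  show ?thesis
  proof (cases "k < m")
    case True
    then show ?thesis using blk_idx[OF b True]
      by (simp add: PM_def normalize_n_def power_divide add_divide_distrib)
  next
    case False
    then have "t" "k = m" using b by auto
    then show ?thesis using False blk_last by (simp add: PM_def normalize_n_def power_divide)
  qed
qed

lemma m0: "0 < m" using m1 by simp
lemma idx01: "0 < n" "1 < n" using m1 by (auto simp: dimn_def)

lemma mv01: "matvec n M v 0 = c 1 * v 0 + s 1 * v 1" "matvec n M v 1 = - s 1 * v 0 + c 1 * v 1"
  "matvec n (transp M) v 0 = c 1 * v 0 - s 1 * v 1" "matvec n (transp M) v 1 = s 1 * v 0 + c 1 * v 1"
  using mv_even[OF m0, of t c s v] mv_odd[OF m0, of t c s v] mvT_even[OF m0, of t c s v] mvT_odd[OF m0, of t c s v]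
  by simp_all

lemma shift01: "matvec n M v 0 - a * v 0 = (CC 0 - a) * v 0 + SS 0 * v 1"
  "matvec n M v 1 - a * v 1 = - SS 0 * v 0 + (CC 0 - a) * v 1"
  unfolding mv01 C0 S0 by (simp_all add: algebra_simps)

lemma shiftT01: "matvec n (transp M) v 0 - a * v 0 = (CC 0 - a) * v 0 - SS 0 * v 1"
  "matvec n (transp M) v 1 - a * v 1 = SS 0 * v 0 + (CC 0 - a) * v 1"
  unfolding mv01 C0 S0 by (simp_all add: algebra_simps)

lemma norm_nn: "0 \<le> norm_n n u"
  unfolding norm_n_def inner_n_def by (simp add: sum_nonneg)

lemma mean_shift:
  assumes "tsum m t (PM v) = 1"
  shows "tsum m t (\<lambda>k. CC k * PM v k) - CC 0 = ttl m t (\<lambda>k. (CC k - CC 0) * PM v k)"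
proof -
  have "tsum m t (\<lambda>k. CC k * PM v k) - CC 0 = tsum m t (\<lambda>k. CC k * PM v k) - tsum m t (\<lambda>k. CC 0 * PM v k)"
    using assms tsum_mult[of m t "CC 0" "PM v"] by simp
  also have "\<dots> = tsum m t (\<lambda>k. (CC k - CC 0) * PM v k)" by (simp add: tsum_diff[symmetric] left_diff_distrib)
  also have "\<dots> = ttl m t (\<lambda>k. (CC k - CC 0) * PM v k)" using tsum_split[OF m1] by simp
  finally show ?thesis .
qed

lemma mean_bounds:
  assumes "tsum m t (PM v) = 1"
  shows "0 \<le> tsum m t (\<lambda>k. CC k * PM v k) - CC 0"
    "tsum m t (\<lambda>k. CC k * PM v k) - CC 0 \<le> (1 - CC 0) * ttl m t (PM v)"
proof -
  show "0 \<le> tsum m t (\<lambda>k. CC k * PM v k) - CC 0" unfolding mean_shift[OF assms]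
    by (rule ttl_nonneg[OF m1]) (auto simp: CC_ge PM_nonneg)
  show "tsum m t (\<lambda>k. CC k * PM v k) - CC 0 \<le> (1 - CC 0) * ttl m t (PM v)"
    unfolding mean_shift[OF assms] ttl_mult[symmetric]
    by (rule ttl_mono[OF m1], rule mult_right_mono) (auto simp: CC_le1 PM_nonneg)
qed

lemma step:
  assumes nv: "tsum m t (PM v) = 1" and p0: "0 < PM v 0"
  fixes \<alpha> \<beta> :: real and u w z v' :: "nat \<Rightarrow> real"
  assumes \<alpha>_def: "\<alpha> = inner_n n v (matvec n M v)"
  and u_def: "u = (\<lambda>i. matvec n M v i - \<alpha> * v i)"
  and w_def: "w = normalize_n n u"
  and \<beta>_def: "\<beta> = inner_n n w (matvec n M w)"
  and z_def: "z = (\<lambda>i. matvec n (transp M) w i - \<beta> * w i)"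
  and v'_def: "v' = normalize_n n z"
  shows "tsum m t (PM v') = 1 \<and> 0 < PM v' 0 \<and> (v' 0 - v 0)^2 + (v' 1 - v 1)^2 \<le> ttl m t (PM v)"
proof -
  define p where "p = PM v 0"
  define x where "x = ttl m t (PM v)"
  have x: "x = 1 - p" using nv tsum_split[OF m1, of t "PM v"] unfolding p_def x_def by simp
  have b0: "blk 0" using m0 by simp
  have ppos: "0 < p" "p \<le> 1" using p0 x ttl_nonneg[OF m1, of t "PM v"] PM_nonneg unfolding p_def x_def by auto
  have x01: "0 \<le> x" "x \<le> 1" using ppos x by auto
  have pv: "p = (v 0)^2 + (v 1)^2" unfolding p_def PM_def using m0 by simp
  have al: "\<alpha> = tsum m t (\<lambda>k. CC k * PM v k)" unfolding \<alpha>_def by (rule inner_Mv)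
  have al_lo: "0 \<le> \<alpha> - CC 0" and al_hi: "\<alpha> - CC 0 \<le> (1 - CC 0) * x"
    using mean_bounds[OF nv] unfolding al x_def by auto
  have al_pos: "0 \<le> \<alpha>" using al_lo C0_pos by linarith
  have PMu: "\<And>k. blk k \<Longrightarrow> PM u k = FF \<alpha> k * PM v k" unfolding u_def by (rule PM_shift)
  define Nu where "Nu = norm_n n u"
  have Nu2: "Nu^2 = tsum m t (\<lambda>k. FF \<alpha> k * PM v k)" unfolding Nu_def norm_sq
    by (rule tsum_cong) (simp add: PMu)
  define Ta where "Ta = ttl m t (\<lambda>k. FF \<alpha> k * PM v k)"
  have Nu2': "Nu^2 = FF \<alpha> 0 * p + Ta" using Nu2 tsum_split[OF m1] unfolding p_def Ta_def by simp
  have Ta_nn: "0 \<le> Ta" unfolding Ta_def by (rule ttl_nonneg[OF m1]) (simp add: FF_nonneg PM_nonneg)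
  have Ta_le: "Ta \<le> FF \<alpha> 0 * x" unfolding Ta_def x_def ttl_mult[symmetric]
    by (rule ttl_mono[OF m1], rule mult_right_mono) (auto simp: FF_le0 al_pos PM_nonneg)
  have Fa0: "0 < FF \<alpha> 0" by (rule FF0_pos)
  have Nu2pos: "0 < Nu^2" using Nu2' mult_pos_pos[OF Fa0 ppos(1)] Ta_nn by linarith
  have Nu_nn: "0 \<le> Nu" unfolding Nu_def by (rule norm_nn)
  have Nu_pos: "0 < Nu" using Nu2pos Nu_nn by (metis less_eq_real_def power_zero_numeral zero_less_power2)
  have PMw: "\<And>k. blk k \<Longrightarrow> PM w k = FF \<alpha> k * PM v k / Nu^2"
    unfolding w_def Nu_def by (simp add: PM_normalize PMu)
  have w01: "w 0 = u 0 / Nu" "w 1 = u 1 / Nu" unfolding w_def normalize_n_def Nu_def using idx01 by auto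
  have nw: "tsum m t (PM w) = 1"
  proof -
    have "tsum m t (PM w) = tsum m t (\<lambda>k. FF \<alpha> k * PM v k / Nu^2)" by (rule tsum_cong) (simp add: PMw)
    also have "\<dots> = 1" using Nu2 Nu2pos by (simp add: tsum_divide)
    finally show ?thesis .
  qed
  define xw where "xw = ttl m t (PM w)"
  have xw: "xw = Ta / Nu^2" unfolding xw_def Ta_def ttl_divide[symmetric]
    by (rule ttl_cong[OF m1]) (simp add: PMw)
  have xw_le: "xw \<le> x"
  proof -
    have "p * Ta \<le> p * (FF \<alpha> 0 * x)" using Ta_le ppos by (simp add: mult_left_mono)
    hence "Ta \<le> x * Nu^2" unfolding Nu2' x by (simp add: algebra_simps)
    thus ?thesis unfolding xw using Nu2pos by (simp add: divide_le_eq)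
  qed
  have be: "\<beta> = tsum m t (\<lambda>k. CC k * PM w k)" unfolding \<beta>_def by (rule inner_Mv)
  have be_lo: "0 \<le> \<beta> - CC 0" and be_hi: "\<beta> - CC 0 \<le> (1 - CC 0) * xw"
    using mean_bounds[OF nw] unfolding be xw_def by auto
  have be_pos: "0 \<le> \<beta>" using be_lo C0_pos by linarith
  have be_hi': "\<beta> - CC 0 \<le> (1 - CC 0) * x"
    using be_hi mult_left_mono[OF xw_le, of "1 - CC 0"] C0_lt1 by linarith
  have PMz: "\<And>k. blk k \<Longrightarrow> PM z k = FF \<beta> k * PM w k" unfolding z_def by (rule PM_shiftT)
  define Nz where "Nz = norm_n n z"
  have Nz2: "Nz^2 = tsum m t (\<lambda>k. FF \<beta> k * PM w k)" unfolding Nz_def norm_sq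
    by (rule tsum_cong) (simp add: PMz)
  have Fb0: "0 < FF \<beta> 0" by (rule FF0_pos)
  have PMw0: "0 < PM w 0" using PMw[OF b0] Fa0 p0 Nu2pos by simp
  have Nz2pos: "0 < Nz^2"
  proof -
    have "0 \<le> ttl m t (\<lambda>k. FF \<beta> k * PM w k)" by (rule ttl_nonneg[OF m1]) (simp add: FF_nonneg PM_nonneg)
    moreover have "0 < FF \<beta> 0 * PM w 0" using Fb0 PMw0 by simp
    ultimately show ?thesis unfolding Nz2 using tsum_split[OF m1] by simp
  qed
  have Nz_nn: "0 \<le> Nz" unfolding Nz_def by (rule norm_nn)
  have Nz_pos: "0 < Nz" using Nz2pos Nz_nn by (metis less_eq_real_def power_zero_numeral zero_less_power2)
  have PMv': "\<And>k. blk k \<Longrightarrow> PM v' k = PM z k / Nz^2"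
    unfolding v'_def Nz_def by (simp add: PM_normalize)
  have v'01: "v' 0 = z 0 / Nz" "v' 1 = z 1 / Nz" unfolding v'_def normalize_n_def Nz_def using idx01 by auto
  have res1: "tsum m t (PM v') = 1"
  proof -
    have "tsum m t (PM v') = tsum m t (\<lambda>k. PM z k / Nz^2)" by (rule tsum_cong) (simp add: PMv')
    also have "\<dots> = 1" using Nz2 Nz2pos by (simp add: tsum_divide PMz cong: tsum_cong)
    finally show ?thesis .
  qed
  have res2: "0 < PM v' 0" using PMv'[OF b0] PMz[OF b0] Fb0 PMw0 Nz2pos by simp
  define K where "K = Nu * Nz"
  have K_pos: "0 < K" unfolding K_def using Nu_pos Nz_pos by simp
  define a where "a = (CC 0 - \<alpha>) * (CC 0 - \<beta>) + (SS 0)^2"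
  define b where "b = SS 0 * (\<alpha> - \<beta>)"
  have u01: "u 0 = (CC 0 - \<alpha>) * v 0 + SS 0 * v 1" "u 1 = - SS 0 * v 0 + (CC 0 - \<alpha>) * v 1"
    unfolding u_def by (rule shift01)+
  have z01: "z 0 = (CC 0 - \<beta>) * w 0 - SS 0 * w 1" "z 1 = SS 0 * w 0 + (CC 0 - \<beta>) * w 1"
    unfolding z_def by (rule shiftT01)+
  have v'0: "v' 0 = (a * v 0 + b * v 1) / K"
    unfolding v'01 z01 w01 u01 a_def b_def K_def using Nu_pos Nz_pos
    by (simp add: field_simps power2_eq_square)
  have v'1: "v' 1 = (- b * v 0 + a * v 1) / K"
    unfolding v'01 z01 w01 u01 a_def b_def K_def using Nu_pos Nz_pos
    by (simp add: field_simps power2_eq_square)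
  have d2: "(v' 0 - v 0)^2 + (v' 1 - v 1)^2 = p * ((a/K - 1)^2 + (b/K)^2)"
    unfolding v'0 v'1 pv using K_pos by (simp add: field_simps power2_eq_square)
  define T where "T = ttl m t (\<lambda>k. FF \<beta> k * FF \<alpha> k * PM v k)"
  have Q: "a^2 + b^2 = FF \<alpha> 0 * FF \<beta> 0"
    unfolding a_def b_def FF_def by (simp add: power2_eq_square algebra_simps)
  have K2: "K^2 = p * (a^2 + b^2) + T"
  proof -
    have "K^2 = Nu^2 * Nz^2" unfolding K_def by (simp add: power_mult_distrib)
    also have "\<dots> = Nu^2 * tsum m t (\<lambda>k. FF \<beta> k * (FF \<alpha> k * PM v k) / Nu^2)"
      unfolding Nz2 by (simp add: PMw cong: tsum_cong)
    also have "\<dots> = tsum m t (\<lambda>k. FF \<beta> k * FF \<alpha> k * PM v k)"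
      using Nu2pos by (simp add: tsum_divide mult.assoc)
    also have "\<dots> = p * (a^2 + b^2) + T" unfolding Q T_def p_def using tsum_split[OF m1] by simp
    finally show ?thesis .
  qed
  have T_nn: "0 \<le> T" unfolding T_def by (rule ttl_nonneg[OF m1]) (simp add: FF_nonneg PM_nonneg)
  have T_le: "T \<le> (a^2 + b^2) * x" unfolding Q T_def x_def ttl_mult[symmetric]
  proof (rule ttl_mono[OF m1], rule mult_right_mono)
    fix k assume k: "1 \<le> k" "blk k"
    show "FF \<beta> k * FF \<alpha> k \<le> FF \<alpha> 0 * FF \<beta> 0"
      using FF_le0[OF k(2) be_pos] FF_le0[OF k(2) al_pos] FF_nonneg[of \<alpha> k] FF_nonneg[of \<beta> k]
      by (simp add: mult_mono mult.commute)
  qed (simp add: PM_nonneg)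
  have S0sq: "(CC 0)^2 + (SS 0)^2 = 1" using CS1[OF b0] .
  have a_ge: "(SS 0)^2 \<le> a"
  proof -
    have "0 \<le> (\<alpha> - CC 0) * (\<beta> - CC 0)" using al_lo be_lo by simp
    thus ?thesis unfolding a_def by (simp add: algebra_simps)
  qed
  have a_pos: "0 < a" using a_ge S0 zero_less_power2[of "SS 0"] by linarith
  have ab: "\<bar>\<alpha> - \<beta>\<bar> \<le> (1 - CC 0) * x" using al_lo al_hi be_lo be_hi' by linarith
  have ab2: "(\<alpha> - \<beta>)^2 \<le> (SS 0)^2 * x"
  proof -
    have "(\<alpha> - \<beta>)^2 \<le> ((1 - CC 0) * x)^2" using ab by (simp add: abs_le_square_iff[symmetric])
    also have "\<dots> = (1 - CC 0)^2 * (x * x)" by (simp add: power2_eq_square)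
    also have "\<dots> \<le> (1 - CC 0)^2 * x"
      by (rule mult_left_mono) (use x01 mult_right_le_one_le[of x x] in auto)
    also have "\<dots> \<le> ((1 - CC 0) * (1 + CC 0)) * x"
    proof (rule mult_right_mono)
      show "(1 - CC 0)^2 \<le> (1 - CC 0) * (1 + CC 0)"
        unfolding power2_eq_square using C0_pos C0_lt1 by (intro mult_left_mono) auto
    qed (use x01 in auto)
    also have "\<dots> = (SS 0)^2 * x"
    proof -
      have e1: "(1 - CC 0) * (1 + CC 0) = 1 - (CC 0)^2" by (simp add: algebra_simps power2_eq_square)
      have e2: "1 - (CC 0)^2 = (SS 0)^2" using S0sq by linarith
      show ?thesis by (simp only: e1 e2)
    qed
    finally show ?thesis .
  qed
  have b2: "b^2 \<le> x * a^2"
  proof -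
    have "b^2 = (SS 0)^2 * (\<alpha> - \<beta>)^2" unfolding b_def by (simp add: power_mult_distrib)
    also have "\<dots> \<le> (SS 0)^2 * ((SS 0)^2 * x)" by (rule mult_left_mono[OF ab2]) simp
    also have "\<dots> = x * ((SS 0)^2 * (SS 0)^2)" by simp
    also have "\<dots> \<le> x * (a * a)" using a_ge a_pos x01 by (intro mult_left_mono mult_mono) auto
    finally show ?thesis by (simp add: power2_eq_square)
  qed
  have "p * ((a/K - 1)^2 + (b/K)^2) \<le> x"
    by (rule key_ineq[OF ppos x a_pos K_pos K2 T_nn T_le b2])
  with d2 res1 res2 show ?thesis unfolding x_def by simp
qed

lemma stepV:
  assumes "tsum m t (PM (aci_v n M v0 k)) = 1" "0 < PM (aci_v n M v0 k) 0"
  shows "tsum m t (PM (aci_v n M v0 (Suc k))) = 1 \<and> 0 < PM (aci_v n M v0 (Suc k)) 0 \<and>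
    (aci_v n M v0 (Suc k) 0 - aci_v n M v0 k 0)^2 + (aci_v n M v0 (Suc k) 1 - aci_v n M v0 k 1)^2
      \<le> ttl m t (PM (aci_v n M v0 k))"
proof -
  have e: "aci_v n M v0 (Suc k) = normalize_n n (\<lambda>i. matvec n (transp M) (aci_w n M v0 k) i
     - inner_n n (aci_w n M v0 k) (matvec n M (aci_w n M v0 k)) * aci_w n M v0 k i)"
    by (simp only: aci_v.simps Let_def)
  have e2: "aci_w n M v0 k = normalize_n n (\<lambda>i. matvec n M (aci_v n M v0 k) i
     - inner_n n (aci_v n M v0 k) (matvec n M (aci_v n M v0 k)) * aci_v n M v0 k i)"
    by (simp only: aci_w.simps Let_def)
  show ?thesis unfolding e by (rule step[OF assms refl refl e2 refl refl refl])
qed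

lemma blk_PM: "blk kk \<Longrightarrow> blknorm m v (Suc kk) = sqrt (PM v kk)"
  unfolding blknorm_def PM_def
  by (cases "kk < m") (auto simp: numeral_2_eq_2)

lemma main:
  fixes v0 :: "nat \<Rightarrow> real" and k0 :: nat and \<rho> :: real
  assumes unit: "norm_n n v0 = 1"
    and b1: "blknorm m v0 1 \<noteq> 0"
    and rho: "0 < \<rho>" "\<rho> < 1"
    and contr: "\<forall>k\<ge>k0. \<forall>j\<in>{2..(if t then m + 1 else m)}.
                 blknorm m (aci_v n M v0 (Suc k)) j \<le> \<rho> * blknorm m (aci_v n M v0 k) j"
  shows "\<forall>k\<ge>k0. blknorm m (\<lambda>i. aci_v n M v0 (Suc k) i - aci_v n M v0 k i) 1 \<le> \<rho> ^ (k - k0)"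
proof -
  define V where "V = aci_v n M v0"
  have b0: "blk 0" using m0 by simp
  have inv: "tsum m t (PM (V k)) = 1 \<and> 0 < PM (V k) 0" for k
  proof (induction k)
    case 0
    have "tsum m t (PM v0) = 1" using norm_sq[of v0] unit by simp
    moreover have "0 < PM v0 0"
    proof -
      have "sqrt (PM v0 0) \<noteq> 0" using b1 blk_PM[OF b0, of v0] by simp
      thus ?thesis using PM_nonneg[of v0 0] by (simp add: less_le)
    qed
    ultimately show ?case unfolding V_def by simp
  next
    case (Suc k)
    then show ?case unfolding V_def using stepV[of v0 k] by simp
  qed
  have dstep: "(V (Suc k) 0 - V k 0)^2 + (V (Suc k) 1 - V k 1)^2 \<le> ttl m t (PM (V k))" for k
    using stepV[of v0 k] inv[of k] unfolding V_def by blast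
  have tail1: "PM (V (Suc k)) kk \<le> \<rho>^2 * PM (V k) kk" if k: "k0 \<le> k" and kk: "1 \<le> kk" "blk kk" for k kk
  proof -
    have j: "Suc kk \<in> {2..(if t then m + 1 else m)}" using kk by auto
    have "sqrt (PM (V (Suc k)) kk) \<le> \<rho> * sqrt (PM (V k) kk)"
    proof -
      have "\<forall>j\<in>{2..(if t then m + 1 else m)}. blknorm m (V (Suc k)) j \<le> \<rho> * blknorm m (V k) j"
        using contr k unfolding V_def by blast
      hence "blknorm m (V (Suc k)) (Suc kk) \<le> \<rho> * blknorm m (V k) (Suc kk)" using j by blast
      thus ?thesis by (simp only: blk_PM[OF kk(2)])
    qed
    hence "(sqrt (PM (V (Suc k)) kk))^2 \<le> (\<rho> * sqrt (PM (V k) kk))^2"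
      by (rule power_mono) (simp add: PM_nonneg)
    thus ?thesis using PM_nonneg by (simp add: power_mult_distrib)
  qed
  have tailn: "PM (V (k0 + d)) kk \<le> (\<rho>^2)^d * PM (V k0) kk" if kk: "1 \<le> kk" "blk kk" for d kk
  proof (induction d)
    case 0 then show ?case by simp
  next
    case (Suc d)
    have "PM (V (k0 + Suc d)) kk \<le> \<rho>^2 * PM (V (k0 + d)) kk"
      using tail1[of "k0 + d" kk] kk by simp
    also have "\<dots> \<le> \<rho>^2 * ((\<rho>^2)^d * PM (V k0) kk)"
      by (rule mult_left_mono[OF Suc]) simp
    finally show ?case by simp
  qed
  have ttln: "ttl m t (PM (V (k0 + d))) \<le> (\<rho>^2)^d" for d
  proof -
    have "ttl m t (PM (V (k0 + d))) \<le> ttl m t (\<lambda>kk. (\<rho>^2)^d * PM (V k0) kk)"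
      by (rule ttl_mono[OF m1]) (rule tailn)
    also have "\<dots> = (\<rho>^2)^d * ttl m t (PM (V k0))" by (rule ttl_mult)
    also have "\<dots> \<le> (\<rho>^2)^d * 1"
    proof (rule mult_left_mono)
      have "tsum m t (PM (V k0)) = PM (V k0) 0 + ttl m t (PM (V k0))" by (rule tsum_split[OF m1])
      thus "ttl m t (PM (V k0)) \<le> 1" using inv[of k0] PM_nonneg[of "V k0" 0] by linarith
    qed simp
    finally show ?thesis by simp
  qed
  show ?thesis
  proof (intro allI impI)
    fix k assume k: "k0 \<le> k"
    then obtain d where kd: "k = k0 + d" using le_Suc_ex by blast
    have "blknorm m (\<lambda>i. V (Suc k) i - V k i) 1 = sqrt ((V (Suc k) 0 - V k 0)^2 + (V (Suc k) 1 - V k 1)^2)"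
      unfolding blknorm_def using m1 by simp
    also have "\<dots> \<le> sqrt ((\<rho>^2)^d)"
      using dstep[of k] ttln[of d] kd by (simp del: power_mult)
    also have "\<dots> = \<rho>^d"
    proof -
      have "(\<rho>^2)^d = (\<rho>^d)^2" by (simp only: power_mult[symmetric] mult.commute)
      thus ?thesis using rho by simp
    qed
    finally show "blknorm m (\<lambda>i. aci_v n M v0 (Suc k) i - aci_v n M v0 k i) 1 \<le> \<rho> ^ (k - k0)"
      unfolding V_def using kd by simp
  qed
qed

end

theorem lemma4p7:
  fixes m :: nat and t :: bool and c s :: "nat \<Rightarrow> real"
    and v0 :: "nat \<Rightarrow> real" and k0 :: nat and \<rho> :: real
  assumes m1: "m \<ge> 1"
    and cs: "\<forall>j\<in>{1..m}. (c j)\<^sup>2 + (s j)\<^sup>2 = 1 \<and> s j \<noteq> 0"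
    and c1: "0 < c 1"
    and cmono: "\<forall>j\<in>{1..<m}. c j < c (Suc j)"
    and supp: "\<forall>i\<ge>dimn m t. v0 i = 0"
    and unit: "norm_n (dimn m t) v0 = 1"
    and gr: "grade (dimn m t) (Amat c s m t) v0 \<ge> 2"
    and b1: "blknorm m v0 1 \<noteq> 0"
    and rho: "0 < \<rho>" "\<rho> < 1"
    and contr: "\<forall>k\<ge>k0. \<forall>j\<in>{2..(if t then m + 1 else m)}.
                 blknorm m (aci_v (dimn m t) (Amat c s m t) v0 (Suc k)) j
                   \<le> \<rho> * blknorm m (aci_v (dimn m t) (Amat c s m t) v0 k) j"
  shows "\<forall>k\<ge>k0. blknorm m (\<lambda>i. aci_v (dimn m t) (Amat c s m t) v0 (Suc k) i
                                  - aci_v (dimn m t) (Amat c s m t) v0 k i) 1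
                  \<le> \<rho> ^ (k - k0)"
proof -
  have I: "aciS m c s" using m1 cs c1 cmono by (simp add: aciS_def)
  show ?thesis by (rule aciS.main[OF I unit b1 rho contr])
qed

end
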